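(* Let $w$ be a metric on a finite set $V$ with $|V|\ge 3$, $T$ a minimum spanning tree of $G_w$, and $T'$ any subtree of $T$. Then $\mathsf{TSP}(w)\ge 2\cdot w(T')-2\cdot\mathsf{adv}^*(T')$.
   Context: $G_w$ is the complete graph on $V$ with edge weights $w$; $w(E')=\sum_{e\in E'}w(e)$ and $w(T')=w(E(T'))$. $\mathsf{TSP}(w)$ is the minimum weight of a Hamiltonian cycle in $G_w$. For a pair $e=(u,v)$, $P^T_e$ is the $u$–$v$ path in $T$; $f\in E(T)$ is covered by $e$ iff $f\in E(P^T_e)$; $\mathsf{cov}(E')$ is the set of edges of $T$ covered by some pair of $E'$; for a subtree $T'$, $\mathsf{cov}(E',T')=\mathsf{cov}(E')\cap E(T')$ and $\mathsf{adv}(E',T')=w(\mathsf{cov}(E',T'))-w(E')$. A vertex $x$ is special in $T'$ iff $\deg_{T'}(x)\ne 2$. $\mathsf{adv}^*(T')$ is the maximum of $\mathsf{adv}(E',T')$ over all sets $E'$ of pairs each having at least one endpoint that is a special vertex of $T'$. *)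

theory Defs
  imports Complex_Main
begin

definition is_metric :: "'a set \<Rightarrow> ('a \<Rightarrow> 'a \<Rightarrow> real) \<Rightarrow> bool" where
  "is_metric V w \<longleftrightarrow>
     (\<forall>x\<in>V. \<forall>y\<in>V. w x y \<ge> 0 \<and> w x y = w y x \<and> (w x y = 0 \<longleftrightarrow> x = y)) \<and>
     (\<forall>x\<in>V. \<forall>y\<in>V. \<forall>z\<in>V. w x z \<le> w x y + w y z)"

definition pairs :: "'a set \<Rightarrow> 'a set set" where
  "pairs V = {{u, v} | u v. u \<in> V \<and> v \<in> V \<and> u \<noteq> v}"

text \<open>Weight of an unordered pair (well defined since w is symmetric).\<close>
definition ew :: "('a \<Rightarrow> 'a \<Rightarrow> real) \<Rightarrow> 'a set \<Rightarrow> real" where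
  "ew w e = (let p = (SOME p. e = {fst p, snd p}) in w (fst p) (snd p))"

definition setw :: "('a \<Rightarrow> 'a \<Rightarrow> real) \<Rightarrow> 'a set set \<Rightarrow> real" where
  "setw w E = (\<Sum>e\<in>E. ew w e)"

definition is_walk :: "'a set set \<Rightarrow> 'a list \<Rightarrow> bool" where
  "is_walk E xs \<longleftrightarrow> xs \<noteq> [] \<and> (\<forall>i. Suc i < length xs \<longrightarrow> {xs ! i, xs ! Suc i} \<in> E)"

definition is_path :: "'a set set \<Rightarrow> 'a list \<Rightarrow> bool" where
  "is_path E xs \<longleftrightarrow> is_walk E xs \<and> distinct xs"

definition path_edges :: "'a list \<Rightarrow> 'a set set" where
  "path_edges xs = {{xs ! i, xs ! Suc i} | i. Suc i < length xs}"

definition is_cycle :: "'a set set \<Rightarrow> 'a list \<Rightarrow> bool" where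
  "is_cycle E xs \<longleftrightarrow> length xs \<ge> 3 \<and> is_path E xs \<and> {last xs, hd xs} \<in> E"

definition is_connected :: "'a set \<Rightarrow> 'a set set \<Rightarrow> bool" where
  "is_connected Vs E \<longleftrightarrow>
     (\<forall>u\<in>Vs. \<forall>v\<in>Vs. \<exists>xs. is_path E xs \<and> hd xs = u \<and> last xs = v)"

definition is_tree :: "'a set \<Rightarrow> 'a set set \<Rightarrow> bool" where
  "is_tree Vs E \<longleftrightarrow> finite Vs \<and> Vs \<noteq> {} \<and> E \<subseteq> pairs Vs \<and>
     is_connected Vs E \<and> \<not> (\<exists>xs. is_cycle E xs)"

definition is_mst :: "('a \<Rightarrow> 'a \<Rightarrow> real) \<Rightarrow> 'a set \<Rightarrow> 'a set set \<Rightarrow> bool" where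
  "is_mst w V ET \<longleftrightarrow> is_tree V ET \<and> (\<forall>E'. is_tree V E' \<longrightarrow> setw w ET \<le> setw w E')"

definition is_subtree :: "'a set set \<Rightarrow> 'a set \<Rightarrow> 'a set set \<Rightarrow> bool" where
  "is_subtree ET Vs' E' \<longleftrightarrow> E' \<subseteq> ET \<and> is_tree Vs' E'"

text \<open>Weight of the Hamiltonian cycle visiting the vertices in the order of xs.\<close>
definition tour_weight :: "('a \<Rightarrow> 'a \<Rightarrow> real) \<Rightarrow> 'a list \<Rightarrow> real" where
  "tour_weight w xs = (\<Sum>i<length xs. w (xs ! i) (xs ! (Suc i mod length xs)))"

definition TSP :: "('a \<Rightarrow> 'a \<Rightarrow> real) \<Rightarrow> 'a set \<Rightarrow> real" where
  "TSP w V = Min {tour_weight w xs | xs. distinct xs \<and> set xs = V}"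

definition covers :: "'a set set \<Rightarrow> 'a set \<Rightarrow> 'a set \<Rightarrow> bool" where
  "covers ET e f \<longleftrightarrow> f \<in> ET \<and>
     (\<exists>u v xs. e = {u, v} \<and> is_path ET xs \<and> hd xs = u \<and> last xs = v \<and> f \<in> path_edges xs)"

definition cov :: "'a set set \<Rightarrow> 'a set set \<Rightarrow> 'a set set" where
  "cov ET E' = {f \<in> ET. \<exists>e\<in>E'. covers ET e f}"

definition cov_in :: "'a set set \<Rightarrow> 'a set set \<Rightarrow> 'a set set \<Rightarrow> 'a set set" where
  "cov_in ET E' ET' = cov ET E' \<inter> ET'"

definition adv :: "('a \<Rightarrow> 'a \<Rightarrow> real) \<Rightarrow> 'a set set \<Rightarrow> 'a set set \<Rightarrow> 'a set set \<Rightarrow> real" where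
  "adv w ET E' ET' = setw w (cov_in ET E' ET') - setw w E'"

definition tdeg :: "'a set set \<Rightarrow> 'a \<Rightarrow> nat" where
  "tdeg E x = card {e \<in> E. x \<in> e}"

definition special :: "'a set \<Rightarrow> 'a set set \<Rightarrow> 'a \<Rightarrow> bool" where
  "special Vs' E' x \<longleftrightarrow> x \<in> Vs' \<and> tdeg E' x \<noteq> 2"

definition adv_star :: "('a \<Rightarrow> 'a \<Rightarrow> real) \<Rightarrow> 'a set \<Rightarrow> 'a set set \<Rightarrow> 'a set \<Rightarrow> 'a set set \<Rightarrow> real" where
  "adv_star w V ET Vs' ET' = Max {adv w ET E' ET' | E'.
      E' \<subseteq> pairs V \<and> (\<forall>e\<in>E'. \<exists>x\<in>e. special Vs' ET' x)}"

end

theory Submission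
  imports Defs
begin


lemma is_walk_single[simp]: "is_walk E [a]"
  by (simp add: is_walk_def)

lemma is_walk_Nil[simp]: "\<not> is_walk E []"
  by (simp add: is_walk_def)

lemma is_walk_Cons2[simp]: "is_walk E (a # b # r) \<longleftrightarrow> {a,b} \<in> E \<and> is_walk E (b # r)"
proof
  assume h: "is_walk E (a # b # r)"
  have "{a,b} \<in> E" using h unfolding is_walk_def by (metis Suc_less_eq length_Cons nth_Cons_0 nth_Cons_Suc zero_less_Suc)
  moreover have "is_walk E (b # r)" unfolding is_walk_def
  proof (intro conjI allI impI)
    fix i assume "Suc i < length (b # r)"
    then have "Suc (Suc i) < length (a # b # r)" by simp
    then have "{(a#b#r) ! Suc i, (a#b#r) ! Suc (Suc i)} \<in> E" using h unfolding is_walk_def by blast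
    then show "{(b # r) ! i, (b # r) ! Suc i} \<in> E" by simp
  qed simp
  ultimately show "{a,b} \<in> E \<and> is_walk E (b # r)" by simp
next
  assume h: "{a,b} \<in> E \<and> is_walk E (b # r)"
  show "is_walk E (a # b # r)" unfolding is_walk_def
  proof (intro conjI allI impI)
    fix i assume i: "Suc i < length (a # b # r)"
    show "{(a # b # r) ! i, (a # b # r) ! Suc i} \<in> E"
    proof (cases i)
      case 0 then show ?thesis using h by simp
    next
      case (Suc j)
      then have "Suc j < length (b # r)" using i by simp
      then have "{(b#r) ! j, (b#r) ! Suc j} \<in> E" using h unfolding is_walk_def by blast
      then show ?thesis using Suc by simp
    qed
  qed simp
qed

lemma is_walk_append:
  assumes "is_walk E xs" "is_walk E ys" "{last xs, hd ys} \<in> E"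
  shows "is_walk E (xs @ ys)"
  using assms
proof (induction xs rule: induct_list012)
  case 1 then show ?case by (simp add: is_walk_def)
next
  case (2 x) then show ?case by (cases ys) simp_all
next
  case (3 x y zs)
  then show ?case by simp
qed

lemma is_walk_mono: "is_walk E xs \<Longrightarrow> E \<subseteq> F \<Longrightarrow> is_walk F xs"
  unfolding is_walk_def by blast

lemma is_walk_take: "is_walk E xs \<Longrightarrow> 0 < n \<Longrightarrow> is_walk E (take n xs)"
  unfolding is_walk_def by (auto simp: nth_take)

lemma is_walk_snoc: "is_walk E xs \<Longrightarrow> {last xs, b} \<in> E \<Longrightarrow> is_walk E (xs @ [b])"
  using is_walk_append[of E xs "[b]"] by simp

lemma rtrancl_path:
  assumes "(a, b) \<in> R\<^sup>*" "\<And>u v. (u,v) \<in> R \<Longrightarrow> {u,v} \<in> E"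
  shows "\<exists>xs. is_path E xs \<and> hd xs = a \<and> last xs = b \<and> set xs \<subseteq> R\<^sup>* `` {a}"
  using assms(1)
proof (induction rule: rtrancl_induct)
  case base
  show ?case by (rule exI[of _ "[a]"]) (simp add: is_path_def)
next
  case (step c b)
  then obtain xs where xs: "is_path E xs" "hd xs = a" "last xs = c" "set xs \<subseteq> R\<^sup>* `` {a}" by blast
  have ne: "xs \<noteq> []" using xs(1) by (simp add: is_path_def is_walk_def)
  show ?case
  proof (cases "b \<in> set xs")
    case True
    then obtain i where i: "i < length xs" "xs ! i = b" by (metis in_set_conv_nth)
    let ?ys = "take (Suc i) xs"
    have "is_path E ?ys" using xs(1) by (simp add: is_path_def is_walk_take)
    moreover have "hd ?ys = a" using xs(2) ne by simp
    moreover have "last ?ys = b" using i ne by (auto simp: last_conv_nth min_def intro: arg_cong[where f="(!) xs"])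
    moreover have "set ?ys \<subseteq> R\<^sup>* `` {a}" using xs(4) by (meson order_trans set_take_subset)
    ultimately show ?thesis by blast
  next
    case False
    have "is_path E (xs @ [b])" using xs False ne step(2) assms(2)
      by (auto simp: is_path_def intro!: is_walk_snoc)
    moreover have "set (xs @ [b]) \<subseteq> R\<^sup>* `` {a}" using xs(4) step by auto
    ultimately show ?thesis using xs ne by (intro exI[of _ "xs @ [b]"]) auto
  qed
qed



definition Rg :: "'a set set \<Rightarrow> 'a set \<Rightarrow> ('a \<times> 'a) set" where
  "Rg E g = {(u,v). {u,v} \<in> E - {g}}"

lemma sym_Rg: "sym (Rg E g)"
  unfolding Rg_def sym_def by (auto simp: insert_commute)

lemma Rg_rtrancl_sym: "(a,b) \<in> (Rg E g)\<^sup>* \<Longrightarrow> (b,a) \<in> (Rg E g)\<^sup>*"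
  by (meson sym_Rg sym_rtrancl symD)

lemma Rg_path:
  assumes "(a, b) \<in> (Rg E g)\<^sup>*"
  shows "\<exists>xs. is_path (E - {g}) xs \<and> hd xs = a \<and> last xs = b \<and> set xs \<subseteq> (Rg E g)\<^sup>* `` {a}"
  using rtrancl_path[OF assms, of "E - {g}"] by (auto simp: Rg_def)

lemma is_path_mono: "is_path E xs \<Longrightarrow> E \<subseteq> F \<Longrightarrow> is_path F xs"
  unfolding is_path_def using is_walk_mono by blast

lemma tree_pairs: "is_tree VT E \<Longrightarrow> e \<in> E \<Longrightarrow> \<exists>a b. e = {a,b} \<and> a \<noteq> b \<and> a \<in> VT \<and> b \<in> VT"
  unfolding is_tree_def pairs_def by blast

lemma not_reach_other:
  assumes T: "is_tree VT E" and g: "g \<in> E" "g = {x,y}" "x \<noteq> y"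
  shows "(x, y) \<notin> (Rg E g)\<^sup>*"
proof
  assume "(x,y) \<in> (Rg E g)\<^sup>*"
  from Rg_path[OF this] obtain xs where xs: "is_path (E - {g}) xs" "hd xs = x" "last xs = y" by blast
  have ne: "xs \<noteq> []" using xs(1) by (auto simp: is_path_def)
  have l2: "length xs \<ge> 2"
  proof (rule ccontr)
    assume "\<not> length xs \<ge> 2"
    moreover have "length xs > 0" using ne by simp
    ultimately have "length xs = 1" by linarith
    then have "hd xs = last xs" by (cases xs) auto
    then show False using xs g by simp
  qed
  have l3: "length xs \<ge> 3"
  proof (rule ccontr)
    assume "\<not> length xs \<ge> 3"
    then have "length xs = 2" using l2 by simp
    then obtain a r where ar: "xs = a # r" "length r = 1" by (cases xs) auto
    then obtain b where "r = [b]" by (cases r) auto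
    with ar have ab: "xs = [a,b]" by simp
    then have "{x,y} \<in> E - {g}" using xs by (simp add: is_path_def)
    then show False using g by simp
  qed
  have "is_path E xs" using is_path_mono[OF xs(1)] by blast
  moreover have "{last xs, hd xs} \<in> E" using xs g by (simp add: insert_commute)
  ultimately have "is_cycle E xs" unfolding is_cycle_def using l3 by blast
  then show False using T unfolding is_tree_def by blast
qed


lemma walk_closed_hd:
  assumes "is_walk E ps" "last ps \<in> Z" "\<And>a b. {a,b} \<in> E \<Longrightarrow> b \<in> Z \<Longrightarrow> a \<in> Z"
  shows "hd ps \<in> Z"
  using assms(1,2)
proof (induction ps)
  case Nil then show ?case by simp
next
  case (Cons a r)
  show ?case
  proof (cases r)
    case Nil then show ?thesis using Cons by simp
  next
    case (Cons b r')
    have "{a,b} \<in> E" "is_walk E (b # r')" using Cons.prems Cons by simp_all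
    moreover have "last (b # r') \<in> Z" using Cons.prems Cons by simp
    ultimately have "b \<in> Z" using Cons.IH Cons by simp
    then show ?thesis using assms(3) \<open>{a,b} \<in> E\<close> by simp
  qed
qed

lemma tree_vert: "is_tree VT E \<Longrightarrow> e \<in> E \<Longrightarrow> v \<in> e \<Longrightarrow> v \<in> VT"
  using tree_pairs by blast

lemma reach_cover:
  assumes T: "is_tree VT E" and g: "g \<in> E" "g = {x,y}" and v: "v \<in> VT"
  shows "v \<in> (Rg E g)\<^sup>* `` {x} \<union> (Rg E g)\<^sup>* `` {y}"
proof -
  let ?Z = "(Rg E g)\<^sup>* `` {x} \<union> (Rg E g)\<^sup>* `` {y}"
  have xV: "x \<in> VT" using tree_vert[OF T g(1)] g(2) by simp
  obtain ps where ps: "is_path E ps" "hd ps = v" "last ps = x"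
    using T v xV unfolding is_tree_def is_connected_def by blast
  have "hd ps \<in> ?Z"
  proof (rule walk_closed_hd[of E])
    show "is_walk E ps" using ps by (simp add: is_path_def)
    show "last ps \<in> ?Z" using ps by simp
  next
    fix a b assume ab: "{a,b} \<in> E" "b \<in> ?Z"
    show "a \<in> ?Z"
    proof (cases "{a,b} = g")
      case True
      then have "a = x \<or> a = y" using g by (metis doubleton_eq_iff insertI1)
      then show ?thesis by auto
    next
      case False
      then have "(b,a) \<in> Rg E g" using ab by (auto simp: Rg_def insert_commute)
      from ab(2) show ?thesis
      proof
        assume "b \<in> (Rg E g)\<^sup>* `` {x}"
        then have "(x,b) \<in> (Rg E g)\<^sup>*" by simp
        then have "(x,a) \<in> (Rg E g)\<^sup>*" using \<open>(b,a) \<in> Rg E g\<close> by (rule rtrancl_into_rtrancl)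
        then show ?thesis by simp
      next
        assume "b \<in> (Rg E g)\<^sup>* `` {y}"
        then have "(y,b) \<in> (Rg E g)\<^sup>*" by simp
        then have "(y,a) \<in> (Rg E g)\<^sup>*" using \<open>(b,a) \<in> Rg E g\<close> by (rule rtrancl_into_rtrancl)
        then show ?thesis by simp
      qed
    qed
  qed
  then show ?thesis using ps by simp
qed

lemma reach_subset:
  assumes T: "is_tree VT E" and g: "g \<in> E" "g = {x,y}"
  shows "(Rg E g)\<^sup>* `` {x} \<subseteq> VT"
proof
  fix v assume "v \<in> (Rg E g)\<^sup>* `` {x}"
  then have "(x,v) \<in> (Rg E g)\<^sup>*" by simp
  then show "v \<in> VT"
  proof (induction rule: rtrancl_induct)
    case base then show ?case using tree_vert[OF T g(1)] g(2) by simp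
  next
    case (step b c)
    then have "{b,c} \<in> E" by (simp add: Rg_def)
    then show ?case using tree_vert[OF T] by blast
  qed
qed

lemma cover_path:
  assumes T: "is_tree VT E" and g: "g \<in> E" "g = {x,y}" "x \<noteq> y"
    and a: "a \<in> (Rg E g)\<^sup>* `` {x}" and b: "b \<in> (Rg E g)\<^sup>* `` {y}"
  shows "\<exists>xs. is_path E xs \<and> hd xs = a \<and> last xs = b \<and> g \<in> path_edges xs"
proof -
  let ?X = "(Rg E g)\<^sup>* `` {x}" and ?Y = "(Rg E g)\<^sup>* `` {y}"
  have disj: "?X \<inter> ?Y = {}"
  proof (rule ccontr)
    assume "?X \<inter> ?Y \<noteq> {}"
    then obtain z where z: "(x,z) \<in> (Rg E g)\<^sup>*" "(y,z) \<in> (Rg E g)\<^sup>*" by auto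
    have "(z,y) \<in> (Rg E g)\<^sup>*" using z(2) by (rule Rg_rtrancl_sym)
    then have "(x,y) \<in> (Rg E g)\<^sup>*" using z(1) by (rule rtrancl_trans[rotated])
    then show False using not_reach_other[OF T g] by simp
  qed
  have ax: "(a,x) \<in> (Rg E g)\<^sup>*" using a Rg_rtrancl_sym by auto
  obtain p1 where p1: "is_path (E - {g}) p1" "hd p1 = a" "last p1 = x" "set p1 \<subseteq> (Rg E g)\<^sup>* `` {a}"
    using Rg_path[OF ax] by blast
  have xa: "(x,a) \<in> (Rg E g)\<^sup>*" using a by simp
  have s1: "set p1 \<subseteq> ?X"
  proof
    fix v assume "v \<in> set p1"
    then have "(a,v) \<in> (Rg E g)\<^sup>*" using p1(4) by auto
    then have "(x,v) \<in> (Rg E g)\<^sup>*" using xa by (rule rtrancl_trans[rotated])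
    then show "v \<in> ?X" by simp
  qed
  have yb: "(y,b) \<in> (Rg E g)\<^sup>*" using b by auto
  obtain p2 where p2: "is_path (E - {g}) p2" "hd p2 = y" "last p2 = b" "set p2 \<subseteq> ?Y"
    using Rg_path[OF yb] by blast
  have ne1: "p1 \<noteq> []" and ne2: "p2 \<noteq> []" using p1 p2 by (auto simp: is_path_def)
  have "is_walk E (p1 @ p2)"
    using p1 p2 g is_walk_append[of E p1 p2] is_walk_mono[of "E - {g}" _ E]
    by (auto simp: is_path_def)
  moreover have "distinct (p1 @ p2)" using p1 p2 s1 disj by (auto simp: is_path_def)
  ultimately have P: "is_path E (p1 @ p2)" by (simp add: is_path_def)
  have "g \<in> path_edges (p1 @ p2)"
  proof -
    let ?i = "length p1 - 1"
    have "(p1 @ p2) ! ?i = x" using ne1 p1(3) by (simp add: last_conv_nth nth_append)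
    moreover have "(p1 @ p2) ! Suc ?i = y" using ne1 ne2 p2(2) by (simp add: nth_append hd_conv_nth)
    moreover have "Suc ?i < length (p1 @ p2)" using ne1 ne2 by simp
    ultimately have "{(p1 @ p2) ! ?i, (p1 @ p2) ! Suc ?i} \<in> path_edges (p1 @ p2)"
      unfolding path_edges_def by blast
    then show ?thesis using \<open>(p1 @ p2) ! ?i = x\<close> \<open>(p1 @ p2) ! Suc ?i = y\<close> g by simp
  qed
  then show ?thesis using P p1 p2 ne1 ne2 by (intro exI[of _ "p1 @ p2"]) auto
qed



lemma tree_finite_E: "is_tree VT E \<Longrightarrow> finite E"
proof -
  assume T: "is_tree VT E"
  have "E \<subseteq> Pow VT" using tree_vert[OF T] by blast
  moreover have "finite VT" using T by (simp add: is_tree_def)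
  ultimately show "finite E" by (meson finite_Pow_iff finite_subset)
qed

lemma card_filter_sum: "finite E \<Longrightarrow> card {e\<in>E. P e} = (\<Sum>e\<in>E. if P e then 1 else (0::nat))"
  by (simp add: sum.inter_filter[symmetric])

lemma reach_x_in: "x \<in> (Rg E g)\<^sup>* `` {x}" by simp

lemma deg_parity:
  assumes T: "is_tree VT E" and g: "g \<in> E" "g = {x,y}" "x \<noteq> y"
  shows "odd (card {v \<in> (Rg E g)\<^sup>* `` {x}. odd (tdeg E v)})"
proof -
  let ?X = "(Rg E g)\<^sup>* `` {x}"
  have fE: "finite E" using tree_finite_E[OF T] .
  have fX: "finite ?X" using reach_subset[OF T g(1,2)] T by (meson finite_subset is_tree_def)
  have "(\<Sum>v\<in>?X. tdeg E v) = (\<Sum>v\<in>?X. \<Sum>e\<in>E. if v \<in> e then 1 else 0)"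
    unfolding tdeg_def using fE by (simp add: card_filter_sum)
  also have "\<dots> = (\<Sum>e\<in>E. \<Sum>v\<in>?X. if v \<in> e then 1 else 0)"
    by (rule sum.swap)
  also have "\<dots> = (\<Sum>e\<in>E. card {v\<in>?X. v \<in> e})"
    by (rule sum.cong[OF refl], rule card_filter_sum[OF fX, symmetric])
  finally have S: "(\<Sum>v\<in>?X. tdeg E v) = (\<Sum>e\<in>E. card {v\<in>?X. v \<in> e})" .
  have yX: "y \<notin> ?X" using not_reach_other[OF T g] by simp
  have g1: "card {v\<in>?X. v \<in> g} = 1"
  proof -
    have "{v\<in>?X. v \<in> g} = {x}" using yX g(2) by auto
    then show ?thesis by simp
  qed
  have ev: "even (card {v\<in>?X. v \<in> e})" if e: "e \<in> E - {g}" for e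
  proof -
    obtain a b where ab: "e = {a,b}" "a \<noteq> b" using tree_pairs[OF T, of e] e by blast
    have r1: "(a,b) \<in> Rg E g" and r2: "(b,a) \<in> Rg E g" using e ab by (auto simp: Rg_def insert_commute)
    have "a \<in> ?X \<longleftrightarrow> b \<in> ?X"
    proof
      assume "a \<in> ?X"
      then have "(x,a) \<in> (Rg E g)\<^sup>*" by simp
      then have "(x,b) \<in> (Rg E g)\<^sup>*" using r1 by (rule rtrancl_into_rtrancl)
      then show "b \<in> ?X" by simp
    next
      assume "b \<in> ?X"
      then have "(x,b) \<in> (Rg E g)\<^sup>*" by simp
      then have "(x,a) \<in> (Rg E g)\<^sup>*" using r2 by (rule rtrancl_into_rtrancl)
      then show "a \<in> ?X" by simp
    qed
    then have "{v\<in>?X. v \<in> e} = {} \<or> {v\<in>?X. v \<in> e} = {a,b}" using ab by auto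
    then show ?thesis
    proof
      assume "{v\<in>?X. v \<in> e} = {}" then show ?thesis by (simp only: card.empty) simp
    next
      assume "{v\<in>?X. v \<in> e} = {a,b}" then show ?thesis using ab(2) by (simp only:) simp
    qed
  qed
  have "(\<Sum>e\<in>E. card {v\<in>?X. v \<in> e}) = card {v\<in>?X. v \<in> g} + (\<Sum>e\<in>E - {g}. card {v\<in>?X. v \<in> e})"
    using fE g(1) by (simp add: sum.remove)
  moreover have "even (\<Sum>e\<in>E - {g}. card {v\<in>?X. v \<in> e})"
    by (rule dvd_sum) (rule ev)
  ultimately have "odd (\<Sum>v\<in>?X. tdeg E v)" using S g1 by simp
  then show ?thesis using fX by (simp add: even_sum_iff)
qed

definition oddV :: "'a set \<Rightarrow> 'a set set \<Rightarrow> 'a set" where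
  "oddV VT E = {v\<in>VT. odd (tdeg E v)}"

lemma oddV_side:
  assumes T: "is_tree VT E" and g: "g \<in> E" "g = {x,y}" "x \<noteq> y"
  shows "odd (card (oddV VT E \<inter> (Rg E g)\<^sup>* `` {x}))"
proof -
  have "oddV VT E \<inter> (Rg E g)\<^sup>* `` {x} = {v \<in> (Rg E g)\<^sup>* `` {x}. odd (tdeg E v)}"
    using reach_subset[OF T g(1,2)] unfolding oddV_def by auto
  then show ?thesis using deg_parity[OF assms] by simp
qed

lemma oddV_even:
  assumes T: "is_tree VT E" and g: "g \<in> E"
  shows "even (card (oddV VT E))"
proof -
  obtain x y where xy: "g = {x,y}" "x \<noteq> y" using tree_pairs[OF T g] by blast
  let ?X = "(Rg E g)\<^sup>* `` {x}" and ?Y = "(Rg E g)\<^sup>* `` {y}"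
  have gyx: "g = {y,x}" using xy by auto
  have oX: "odd (card (oddV VT E \<inter> ?X))" using oddV_side[OF T g xy] .
  have oY: "odd (card (oddV VT E \<inter> ?Y))" using oddV_side[OF T g gyx] xy by auto
  have disj: "?X \<inter> ?Y = {}"
  proof (rule ccontr)
    assume "?X \<inter> ?Y \<noteq> {}"
    then obtain z where z: "(x,z) \<in> (Rg E g)\<^sup>*" "(y,z) \<in> (Rg E g)\<^sup>*" by auto
    have "(z,y) \<in> (Rg E g)\<^sup>*" using z(2) by (rule Rg_rtrancl_sym)
    then have "(x,y) \<in> (Rg E g)\<^sup>*" using z(1) by (rule rtrancl_trans[rotated])
    then show False using not_reach_other[OF T g xy] by simp
  qed
  have cov: "oddV VT E = (oddV VT E \<inter> ?X) \<union> (oddV VT E \<inter> ?Y)"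
    using reach_cover[OF T g xy(1)] unfolding oddV_def by blast
  have fin: "finite (oddV VT E)" using T unfolding oddV_def is_tree_def by simp
  have "card (oddV VT E) = card (oddV VT E \<inter> ?X) + card (oddV VT E \<inter> ?Y)"
    by (subst cov, rule card_Un_disjoint) (use fin disj in auto)
  then show ?thesis using oX oY by simp
qed



lemma pair_even: fixes m :: nat and P :: "nat \<Rightarrow> bool" shows "(\<forall>j<m. P (2*j) = P (2*j+1)) \<Longrightarrow> even (card {i. i < 2*m \<and> P i})"
proof (induction m)
  case 0 then show ?case by simp
next
  case (Suc m)
  have split: "{i. i < 2*Suc m \<and> P i} = {i. i < 2*m \<and> P i} \<union> {i. i \<in> {2*m, 2*m+1} \<and> P i}"
    by auto
  have d: "{i. i < 2*m \<and> P i} \<inter> {i. i \<in> {2*m, 2*m+1} \<and> P i} = {}" by auto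
  have e1: "even (card {i. i < 2*m \<and> P i})" using Suc by auto
  have e2: "even (card {i. i \<in> {2*m, 2*m+1} \<and> P i})"
  proof (cases "P (2*m)")
    case True
    then have "P (2*m+1)" using Suc.prems by auto
    then have "{i. i \<in> {2*m, 2*m+1} \<and> P i} = {2*m, 2*m+1}" using True by auto
    then show ?thesis by simp
  next
    case False
    then have "\<not> P (2*m+1)" using Suc.prems by auto
    then have "{i. i \<in> {2*m, 2*m+1} \<and> P i} = {}" using False by auto
    then show ?thesis by (simp only: card.empty) simp
  qed
  have "card {i. i < 2*Suc m \<and> P i} = card {i. i < 2*m \<and> P i} + card {i. i \<in> {2*m, 2*m+1} \<and> P i}"
    by (subst split, rule card_Un_disjoint) (use d in auto)
  then show ?case using e1 e2 by simp
qed

lemma split_exists: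
  assumes "distinct zs" "set zs = OS" "length zs = 2*m" "odd (card (OS \<inter> Z))"
  shows "\<exists>j<m. (zs!(2*j) \<in> Z) \<noteq> (zs!(2*j+1) \<in> Z)"
proof (rule ccontr)
  assume "\<not> ?thesis"
  then have "\<forall>j<m. (zs!(2*j) \<in> Z) = (zs!(2*j+1) \<in> Z)" by blast
  then have ev: "even (card {i. i < 2*m \<and> zs!i \<in> Z})" by (rule pair_even)
  have inj: "inj_on (\<lambda>i. zs!i) {i. i < 2*m \<and> zs!i \<in> Z}"
    using assms(1,3) by (auto simp: inj_on_def nth_eq_iff_index_eq)
  have img: "(\<lambda>i. zs!i) ` {i. i < 2*m \<and> zs!i \<in> Z} = OS \<inter> Z"
    using assms(2,3) by (auto simp: in_set_conv_nth)
  have "card (OS \<inter> Z) = card {i. i < 2*m \<and> zs!i \<in> Z}"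
    using card_image[OF inj] img by simp
  then show False using ev assms(4) by simp
qed

lemma cover_pair:
  assumes T: "is_tree VT E" and sub: "E \<subseteq> ET" and g: "g \<in> E" "g = {x,y}" "x \<noteq> y"
    and a: "a \<in> (Rg E g)\<^sup>* `` {x}" and b: "b \<in> VT" "b \<notin> (Rg E g)\<^sup>* `` {x}"
  shows "covers ET {a,b} g"
proof -
  have "b \<in> (Rg E g)\<^sup>* `` {y}" using reach_cover[OF T g(1,2) b(1)] b(2) by blast
  then obtain xs where xs: "is_path E xs" "hd xs = a" "last xs = b" "g \<in> path_edges xs"
    using cover_path[OF T g a] by blast
  have "is_path ET xs" using is_path_mono[OF xs(1) sub] .
  then show ?thesis unfolding covers_def using xs g sub by blast
qed

definition Mpairs :: "'a list \<Rightarrow> nat \<Rightarrow> 'a set set" where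
  "Mpairs zs m = {{zs!(2*j), zs!(2*j+1)} | j. j < m}"

lemma Mpairs_cover:
  assumes T: "is_tree VT E" and sub: "E \<subseteq> ET" and g: "g \<in> E"
    and zs: "distinct zs" "set zs = oddV VT E" "length zs = 2*m"
  shows "\<exists>e\<in>Mpairs zs m. covers ET e g"
proof -
  obtain x y where xy: "g = {x,y}" "x \<noteq> y" using tree_pairs[OF T g] by blast
  let ?X = "(Rg E g)\<^sup>* `` {x}"
  obtain j where j: "j < m" "(zs!(2*j) \<in> ?X) \<noteq> (zs!(2*j+1) \<in> ?X)"
    using split_exists[OF zs oddV_side[OF T g xy]] by blast
  have inV: "zs!(2*j) \<in> VT" "zs!(2*j+1) \<in> VT"
    using zs j(1) nth_mem[of "2*j" zs] nth_mem[of "2*j+1" zs] unfolding oddV_def by auto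
  have mem: "{zs!(2*j), zs!(2*j+1)} \<in> Mpairs zs m" using j(1) unfolding Mpairs_def by blast
  show ?thesis
  proof (cases "zs!(2*j) \<in> ?X")
    case True
    then have "zs!(2*j+1) \<notin> ?X" using j by blast
    then have "covers ET {zs!(2*j), zs!(2*j+1)} g" using cover_pair[OF T sub g xy True inV(2)] by blast
    then show ?thesis using mem by blast
  next
    case False
    then have "zs!(2*j+1) \<in> ?X" using j by blast
    then have "covers ET {zs!(2*j+1), zs!(2*j)} g" using cover_pair[OF T sub g xy _ inV(1) False] by blast
    then show ?thesis using mem by (auto simp: insert_commute)
  qed
qed

lemma cov_in_all:
  assumes T: "is_tree VT E" and sub: "E \<subseteq> ET"
    and zs: "distinct zs" "set zs = oddV VT E" "length zs = 2*m"
  shows "cov_in ET (Mpairs zs m) E = E"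
  using Mpairs_cover[OF T sub _ zs] sub unfolding cov_in_def cov_def by blast



fun pw :: "('a \<Rightarrow> 'a \<Rightarrow> real) \<Rightarrow> 'a list \<Rightarrow> real" where
  "pw w (a # b # r) = w a b + pw w (b # r)"
| "pw w _ = 0"

lemma pw_nth: "pw w ys = (\<Sum>i< length ys - 1. w (ys!i) (ys!Suc i))"
proof (induction ys rule: induct_list012)
  case (3 a b r)
  have "(\<Sum>i< length (a#b#r) - 1. w ((a#b#r)!i) ((a#b#r)!Suc i))
      = (\<Sum>i< Suc (length (b#r) - 1). w ((a#b#r)!i) ((a#b#r)!Suc i))" by simp
  also have "\<dots> = w a b + (\<Sum>i< length (b#r) - 1. w ((b#r)!i) ((b#r)!Suc i))"
    by (subst sum.lessThan_Suc_shift) simp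
  finally show ?case using 3 by simp
qed auto

lemma pw_snoc: "xs \<noteq> [] \<Longrightarrow> pw w (xs @ [y]) = pw w xs + w (last xs) y"
proof (induction xs rule: induct_list012)
  case (3 a b r)
  then show ?case by simp
qed auto

lemma tour_pw: assumes "xs \<noteq> []" shows "tour_weight w xs = pw w (xs @ [hd xs])"
proof -
  let ?n = "length xs"
  have "pw w (xs @ [hd xs]) = (\<Sum>i< ?n. w ((xs @ [hd xs])!i) ((xs @ [hd xs])!Suc i))"
    by (simp add: pw_nth)
  also have "\<dots> = (\<Sum>i< ?n. w (xs!i) (xs ! (Suc i mod ?n)))"
  proof (rule sum.cong[OF refl])
    fix i assume i: "i \<in> {..<?n}"
    have "(xs @ [hd xs])!i = xs!i" using i by (simp add: nth_append)
    moreover have "(xs @ [hd xs])!Suc i = xs ! (Suc i mod ?n)"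
    proof (cases "Suc i < ?n")
      case True then show ?thesis by (simp add: nth_append)
    next
      case False
      then have "Suc i = ?n" using i by simp
      then show ?thesis using assms by (simp add: nth_append hd_conv_nth)
    qed
    ultimately show "w ((xs @ [hd xs])!i) ((xs @ [hd xs])!Suc i) = w (xs!i) (xs ! (Suc i mod ?n))" by simp
  qed
  finally show ?thesis unfolding tour_weight_def by simp
qed

lemma tour_rotate1: "xs \<noteq> [] \<Longrightarrow> tour_weight w (rotate1 xs) = tour_weight w xs"
proof -
  assume ne: "xs \<noteq> []"
  then obtain a r where xs: "xs = a # r" by (cases xs) auto
  show ?thesis
  proof (cases r)
    case Nil then show ?thesis using xs by simp
  next
    case (Cons b r')
    have "tour_weight w (rotate1 xs) = pw w (b # r' @ [a] @ [b])"
      using xs Cons by (simp add: tour_pw)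
    also have "\<dots> = pw w ((b # r' @ [a]) @ [b])" by simp
    also have "\<dots> = pw w (b # r' @ [a]) + w a b" by (subst pw_snoc) auto
    also have "\<dots> = tour_weight w xs" using xs Cons by (simp add: tour_pw)
    finally show ?thesis .
  qed
qed

lemma tour_rotate: "xs \<noteq> [] \<Longrightarrow> tour_weight w (rotate n xs) = tour_weight w xs"
proof (induction n)
  case 0 then show ?case by simp
next
  case (Suc n)
  have "rotate (Suc n) xs = rotate1 (rotate n xs)" by (simp add: rotate_def)
  moreover have "rotate n xs \<noteq> []" using Suc.prems by simp
  ultimately show ?case using Suc tour_rotate1 by metis
qed

lemma shortcut:
  assumes tri: "\<And>x y z. x \<in> V \<Longrightarrow> y \<in> V \<Longrightarrow> z \<in> V \<Longrightarrow> w x z \<le> w x y + w y z"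
  shows "set (a # r) \<subseteq> V \<Longrightarrow> (r = [] \<or> P (last r)) \<Longrightarrow> pw w (a # filter P r) \<le> pw w (a # r)"
proof (induction r arbitrary: a)
  case Nil then show ?case by simp
next
  case (Cons b r')
  show ?case
  proof (cases "P b")
    case True
    have "pw w (b # filter P r') \<le> pw w (b # r')"
      using Cons.IH[of b] Cons.prems by (cases r') auto
    then show ?thesis using True by simp
  next
    case False
    then have ne: "r' \<noteq> []" using Cons.prems by auto
    then obtain c r'' where r': "r' = c # r''" by (cases r') auto
    have IH: "pw w (a # filter P r') \<le> pw w (a # r')"
      using Cons.IH[of a] Cons.prems ne by auto
    have "w a c \<le> w a b + w b c" using tri Cons.prems r' by simp
    then have "pw w (a # r') \<le> pw w (a # b # r')" using r' by simp
    then show ?thesis using IH False by simp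
  qed
qed

lemma sum_even_odd: fixes m :: nat shows "(\<Sum>i<2*m. f i) = (\<Sum>j<m. f (2*j)) + (\<Sum>j<m. f (2*j+1)::real)"
  by (induction m) (simp_all add: algebra_simps)

lemma ew_pair:
  assumes sym: "\<And>x y. x \<in> V \<Longrightarrow> y \<in> V \<Longrightarrow> w x y = w y x" and ab: "a \<in> V" "b \<in> V"
  shows "ew w {a,b} = w a b"
proof -
  let ?p = "SOME p. {a,b} = {fst p, snd p}"
  have "{a,b} = {fst ?p, snd ?p}" by (rule someI[of _ "(a,b)"]) simp
  then have "(fst ?p = a \<and> snd ?p = b) \<or> (fst ?p = b \<and> snd ?p = a)" by (auto simp: doubleton_eq_iff)
  then show ?thesis unfolding ew_def Let_def using sym ab by auto
qed

lemma setw_Mpairs: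
  assumes sym: "\<And>x y. x \<in> V \<Longrightarrow> y \<in> V \<Longrightarrow> w x y = w y x"
    and nn: "\<And>x y. x \<in> V \<Longrightarrow> y \<in> V \<Longrightarrow> 0 \<le> w x y"
    and zs: "set zs \<subseteq> V" "length zs = 2*m"
  shows "setw w (Mpairs zs m) \<le> (\<Sum>j<m. w (zs!(2*j)) (zs!(2*j+1)))"
proof -
  have inV: "zs!(2*j) \<in> V" "zs!(2*j+1) \<in> V" if "j < m" for j
    using zs that nth_mem[of "2*j" zs] nth_mem[of "2*j+1" zs] by auto
  have M: "Mpairs zs m = (\<lambda>j. {zs!(2*j), zs!(2*j+1)}) ` {..<m}"
    unfolding Mpairs_def by auto
  have "setw w (Mpairs zs m) \<le> (\<Sum>j<m. (ew w \<circ> (\<lambda>j. {zs!(2*j), zs!(2*j+1)})) j)"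
    unfolding setw_def M
  proof (rule sum_image_le)
    fix j assume "j \<in> {..<m}"
    then have j: "j < m" by simp
    show "0 \<le> ew w {zs!(2*j), zs!(2*j+1)}"
      using ew_pair[OF sym inV[OF j]] nn[OF inV[OF j]] by simp
  qed simp
  also have "\<dots> = (\<Sum>j<m. w (zs!(2*j)) (zs!(2*j+1)))"
  proof (rule sum.cong[OF refl])
    fix j assume "j \<in> {..<m}"
    then have j: "j < m" by simp
    show "(ew w \<circ> (\<lambda>j. {zs!(2*j), zs!(2*j+1)})) j = w (zs!(2*j)) (zs!(2*j+1))"
      using ew_pair[OF sym inV[OF j]] by simp
  qed
  finally show ?thesis .
qed



lemma Mpairs_admissible:
  assumes zs: "distinct zs" "set zs = oddV VT E" "length zs = 2*m" and OV: "oddV VT E \<subseteq> V"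
  shows "Mpairs zs m \<subseteq> pairs V \<and> (\<forall>e\<in>Mpairs zs m. \<exists>x\<in>e. special VT E x)"
proof -
  have *: "{zs!(2*j), zs!(2*j+1)} \<in> pairs V \<and> special VT E (zs!(2*j))" if j: "j < m" for j
  proof -
    have i1: "2*j < length zs" and i2: "2*j+1 < length zs" using j zs(3) by auto
    have m1: "zs!(2*j) \<in> oddV VT E" and m2: "zs!(2*j+1) \<in> oddV VT E"
      using nth_mem[OF i1] nth_mem[OF i2] zs(2) by auto
    have ne: "zs!(2*j) \<noteq> zs!(2*j+1)" using zs(1) i1 i2 by (simp add: nth_eq_iff_index_eq)
    have "{zs!(2*j), zs!(2*j+1)} \<in> pairs V" using m1 m2 OV ne unfolding pairs_def by blast
    moreover have "special VT E (zs!(2*j))" using m1 unfolding oddV_def special_def by auto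
    ultimately show ?thesis by blast
  qed
  show ?thesis unfolding Mpairs_def using * by blast
qed

lemma adv_le_star:
  assumes fV: "finite V" and E': "E' \<subseteq> pairs V" "\<forall>e\<in>E'. \<exists>x\<in>e. special VT' ET' x"
  shows "adv w ET E' ET' \<le> adv_star w V ET VT' ET'"
proof -
  have fp: "finite (pairs V)"
  proof -
    have "pairs V \<subseteq> Pow V" unfolding pairs_def by auto
    then show ?thesis using fV by (meson finite_Pow_iff finite_subset)
  qed
  have "{adv w ET E' ET' | E'. E' \<subseteq> pairs V \<and> (\<forall>e\<in>E'. \<exists>x\<in>e. special VT' ET' x)}
        \<subseteq> (\<lambda>E'. adv w ET E' ET') ` Pow (pairs V)" by auto
  then have fin: "finite {adv w ET E' ET' | E'. E' \<subseteq> pairs V \<and> (\<forall>e\<in>E'. \<exists>x\<in>e. special VT' ET' x)}"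
    using fp by (rule finite_subset[OF _ finite_imageI[OF finite_Pow_iff[THEN iffD2]]])
  show ?thesis unfolding adv_star_def by (rule Max_ge[OF fin]) (use E' in blast)
qed

theorem mainTheorem3:
  fixes V :: "'a set" and w :: "'a \<Rightarrow> 'a \<Rightarrow> real"
    and ET :: "'a set set" and VT' :: "'a set" and ET' :: "'a set set"
  assumes "finite V" and "card V \<ge> 3"
    and "is_metric V w"
    and "is_mst w V ET"
    and "is_subtree ET VT' ET'"
  shows "TSP w V \<ge> 2 * setw w ET' - 2 * adv_star w V ET VT' ET'"
proof -
  note fV = assms(1)
  have nn: "\<And>x y. x \<in> V \<Longrightarrow> y \<in> V \<Longrightarrow> 0 \<le> w x y"
    and sym: "\<And>x y. x \<in> V \<Longrightarrow> y \<in> V \<Longrightarrow> w x y = w y x"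
    and tri: "\<And>x y z. x \<in> V \<Longrightarrow> y \<in> V \<Longrightarrow> z \<in> V \<Longrightarrow> w x z \<le> w x y + w y z"
    using assms(3) unfolding is_metric_def by blast+
  have TV: "is_tree V ET" using assms(4) by (simp add: is_mst_def)
  have sub: "ET' \<subseteq> ET" and T: "is_tree VT' ET'" using assms(5) by (simp_all add: is_subtree_def)
  have Vne: "V \<noteq> {}" using assms(2) by auto
  let ?S = "{tour_weight w xs | xs. distinct xs \<and> set xs = V}"
  have finS: "finite ?S"
  proof -
    have "?S \<subseteq> tour_weight w ` {xs. set xs \<subseteq> V \<and> distinct xs}" by auto
    then show ?thesis using finite_subset_distinct[OF fV] by (meson finite_imageI finite_subset)
  qed
  have neS: "?S \<noteq> {}" using finite_distinct_list[OF fV] by auto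
  have "TSP w V \<in> ?S" unfolding TSP_def using Min_in[OF finS neS] .
  then obtain H where H: "distinct H" "set H = V" "TSP w V = tour_weight w H" by auto
  have Hne: "H \<noteq> []" using H Vne by auto
  show ?thesis
  proof (cases "ET' = {}")
    case True
    have "adv w ET {} ET' = 0" unfolding adv_def cov_in_def setw_def using True by simp
    then have a0: "0 \<le> adv_star w V ET VT' ET'" using adv_le_star[OF fV, of "{}" VT' ET' w ET] by simp
    have "0 \<le> tour_weight w H" unfolding tour_weight_def
    proof (rule sum_nonneg)
      fix i assume "i \<in> {..<length H}"
      then have "i < length H" "Suc i mod length H < length H" using Hne by auto
      then have "H ! i \<in> V" "H ! (Suc i mod length H) \<in> V" using H(2) by auto
      then show "0 \<le> w (H ! i) (H ! (Suc i mod length H))" by (rule nn)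
    qed
    then show ?thesis using H(3) a0 True by (simp add: setw_def)
  next
    case False
    then obtain g where g: "g \<in> ET'" by blast
    let ?O = "oddV VT' ET'"
    have evO: "even (card ?O)" using oddV_even[OF T g] .
    have OV: "?O \<subseteq> V"
    proof
      fix v assume v: "v \<in> ?O"
      then have "odd (card {e\<in>ET'. v \<in> e})" unfolding oddV_def tdeg_def by simp
      then have "{e\<in>ET'. v \<in> e} \<noteq> {}" by (intro notI) simp
      then obtain e where "e \<in> ET'" "v \<in> e" by blast
      then show "v \<in> V" using sub tree_vert[OF TV] by blast
    qed
    obtain x y where xy: "g = {x,y}" "x \<noteq> y" using tree_pairs[OF T g] by blast
    have "odd (card (?O \<inter> (Rg ET' g)\<^sup>* `` {x}))" using oddV_side[OF T g xy] .
    then have "?O \<noteq> {}" by (intro notI) simp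
    then obtain o1 where o1: "o1 \<in> ?O" by blast
    then have "o1 \<in> set H" using OV H(2) by auto
    then obtain i where i: "i < length H" "H ! i = o1" by (auto simp: in_set_conv_nth)
    define H' where "H' = rotate i H"
    have H'1: "distinct H'" "set H' = V" using H unfolding H'_def by simp_all
    have H'hd: "hd H' = o1" using i Hne unfolding H'_def by (simp add: hd_rotate_conv_nth)
    have H'ne: "H' \<noteq> []" using Hne unfolding H'_def by simp
    have TSP': "TSP w V = tour_weight w H'" using H(3) tour_rotate[OF Hne] unfolding H'_def by simp
    obtain r where r: "H' = o1 # r" using H'ne H'hd by (cases H') auto
    define os where "os = filter (\<lambda>v. v \<in> ?O) H'"
    have os1: "distinct os" "set os = ?O" using H'1 OV unfolding os_def by auto
    have os_r: "os = o1 # filter (\<lambda>v. v \<in> ?O) r" using r o1 unfolding os_def by simp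
    have osne: "os \<noteq> []" and oshd: "hd os = o1" using os_r by simp_all
    obtain m where m: "card ?O = 2*m" using evO by (elim evenE) simp
    have los: "length os = 2*m" using distinct_card[OF os1(1)] os1(2) m by simp
    have "pw w (o1 # filter (\<lambda>v. v \<in> ?O) (r @ [o1])) \<le> pw w (o1 # (r @ [o1]))"
      by (rule shortcut[OF tri]) (use H'1 r o1 in auto)
    then have short: "pw w (os @ [hd os]) \<le> TSP w V"
      using TSP' tour_pw[OF H'ne] r os_r oshd o1 by simp
    \<comment> \<open>splitting into two matchings\<close>
    define ys where "ys = os @ [hd os]"
    define os' where "os' = tl ys"
    have os'_rot: "os' = rotate1 os" using osne unfolding os'_def ys_def by (cases os) auto
    have os'1: "distinct os'" "set os' = ?O" "length os' = 2*m" using os1 los os'_rot by simp_all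
    have "pw w ys = (\<Sum>k<2*m. w (ys!k) (ys!Suc k))" using los unfolding ys_def by (simp add: pw_nth)
    also have "\<dots> = (\<Sum>j<m. w (ys!(2*j)) (ys!Suc (2*j))) + (\<Sum>j<m. w (ys!(2*j+1)) (ys!Suc (2*j+1)))"
      by (rule sum_even_odd)
    also have "(\<Sum>j<m. w (ys!(2*j)) (ys!Suc (2*j))) = (\<Sum>j<m. w (os!(2*j)) (os!(2*j+1)))"
    proof (rule sum.cong[OF refl])
      fix j assume "j \<in> {..<m}"
      then have "2*j+1 < length os" using los by simp
      then show "w (ys!(2*j)) (ys!Suc (2*j)) = w (os!(2*j)) (os!(2*j+1))"
        unfolding ys_def by (simp add: nth_append)
    qed
    also have "(\<Sum>j<m. w (ys!(2*j+1)) (ys!Suc (2*j+1))) = (\<Sum>j<m. w (os'!(2*j)) (os'!(2*j+1)))"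
    proof (rule sum.cong[OF refl])
      fix j assume "j \<in> {..<m}"
      then have "2*j+1 < length (tl ys)" using los unfolding ys_def by simp
      then have "tl ys ! (2*j) = ys ! (2*j+1)" "tl ys ! (2*j+1) = ys ! Suc (2*j+1)"
        by (simp_all add: nth_tl)
      then show "w (ys!(2*j+1)) (ys!Suc (2*j+1)) = w (os'!(2*j)) (os'!(2*j+1))"
        unfolding os'_def by simp
    qed
    finally have split: "pw w ys = (\<Sum>j<m. w (os!(2*j)) (os!(2*j+1))) + (\<Sum>j<m. w (os'!(2*j)) (os'!(2*j+1)))" .
    have s1: "setw w (Mpairs os m) \<le> (\<Sum>j<m. w (os!(2*j)) (os!(2*j+1)))"
      by (rule setw_Mpairs[OF sym nn]) (use os1 OV los in auto)
    have s2: "setw w (Mpairs os' m) \<le> (\<Sum>j<m. w (os'!(2*j)) (os'!(2*j+1)))"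
      by (rule setw_Mpairs[OF sym nn]) (use os'1 OV in auto)
    have a1: "adv w ET (Mpairs os m) ET' = setw w ET' - setw w (Mpairs os m)"
      unfolding adv_def using cov_in_all[OF T sub os1 los] by simp
    have a2: "adv w ET (Mpairs os' m) ET' = setw w ET' - setw w (Mpairs os' m)"
      unfolding adv_def using cov_in_all[OF T sub os'1] by simp
    have b1: "adv w ET (Mpairs os m) ET' \<le> adv_star w V ET VT' ET'"
      using Mpairs_admissible[OF os1 los OV] adv_le_star[OF fV] by blast
    have b2: "adv w ET (Mpairs os' m) ET' \<le> adv_star w V ET VT' ET'"
      using Mpairs_admissible[OF os'1 OV] adv_le_star[OF fV] by blast
    show ?thesis using short split s1 s2 a1 a2 b1 b2 unfolding ys_def by linarith
  qed
qed

end
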